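(* Let $\mathcal{A}$ be a complete deterministic timed automaton (CTA). Let $\gamma_{r1}$ and $\gamma_{r2}$ be valid reset-clocked words of $\mathcal{A}$ and let $\xi$ be a region word. If $\gamma_{r1}$ and $\gamma_{r2}$ reach the same symbolic state of $\mathcal{A}$, then for all $\gamma_{r1}'\in\mathit{vs}_{\mathcal{A}}(\gamma_{r1},\xi)$ and $\gamma_{r2}'\in\mathit{vs}_{\mathcal{A}}(\gamma_{r2},\xi)$: (1) $resets(\gamma_{r1}')=resets(\gamma_{r2}')$; (2) $\gamma_{r1}\gamma_{r1}'$ and $\gamma_{r2}\gamma_{r2}'$ reach the same symbolic state.
   Context: Let $\Sigma$ be a finite alphabet and $\mathcal{C}=\{c_1,\dots,c_m\}$ a finite set of clocks. A clock constraint is a finite conjunction of atomic constraints $c\sim k$ ($c\in\mathcal{C}$, $k\in\mathbb{N}$, ${\sim}\in\{<,\le,=,\ge,>\}$). A clock valuation is $\nu:\mathcal{C}\to\mathbb{R}_{\ge0}$ (identified with a vector in $\mathbb{R}_{\ge0}^m$); $\nu+d$ adds $d$ to all clocks, $[\mathcal{B}\to0]\nu$ resets the clocks in $\mathcal{B}$. A timed automaton is $\mathcal{A}=(\Sigma,L,l_0,F,\mathcal{C},\Delta)$ with finite location set $L$, initial $l_0$, accepting $F\subseteq L$, transitions $\Delta\subseteq L\times\Sigma\times\Phi(\mathcal{C})\times2^{\mathcal{C}}\times L$. A run over a delay-timed word $(\sigma_1,t_1)\cdots(\sigma_n,t_n)$ is $(l_0,\nu_0)\xrightarrow{t_1,\sigma_1}\cdots\xrightarrow{t_n,\sigma_n}(l_n,\nu_n)$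 with $\nu_0\equiv0$ and transitions $(l_{i-1},\sigma_i,\phi_i,\mathcal{B}_i,l_i)\in\Delta$ such that $\nu_{i-1}+t_i$ satisfies $\phi_i$ and $\nu_i=[\mathcal{B}_i\to0](\nu_{i-1}+t_i)$. $\mathcal{A}$ is a CTA if every delay-timed word has exactly one run. The reset-clocked word of the run is $(\sigma_1,\mathbf{v}_1,\mathbf{b}_1)\cdots(\sigma_n,\mathbf{v}_n,\mathbf{b}_n)$ with $\mathbf{v}_i=\nu_{i-1}+t_i$ and $\mathbf{b}_{i,j}=\top$ iff $c_j\in\mathcal{B}_i$ (else $\bot$); $resets(\cdot)$ returns the sequence $\mathbf{b}_1,\dots,\mathbf{b}_n$ and $vw(\cdot)$ drops the reset components. A reset-clocked word is valid for $\mathcal{A}$ if it is the reset-clocked word of some run, and it then reaches the symbolic state $(l_n,\llbracket\nu_n\rrbracket)$ of that run. Regions: with $\kappa(c)$ the largest integer in guards of $\mathcal{A}$ over $c$, valuations $\nu,\nu'$ are region-equivalent iff (i) for all $c$, $\lfloor\nu(c)\rfloor=\lfloor\nu'(c)\rfloor$ or both exceed $\kappa(c)$; (ii) for all $c$ with $\nu(c)\le\kappa(c)$, $\mathrm{frac}(\nu(c))=0$ iff $\mathrm{frac}(\nu'(c))=0$; (iii) for $c_i,c_j$ with $\nu(c_i)\le\kappa(c_i),\nu(c_j)\le\kappa(c_j)$, $\mathrm{frac}(\nu(c_i))\le\mathrm{frac}(\nu(c_j))$ iff $\mathrm{frac}(\nu'(c_i))\le\mathrm{frac}(\nu'(c_j))$;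 $\llbracket\nu\rrbracket$ is the region of $\nu$ and a symbolic state is a pair (location, region). A region word is a finite sequence of pairs $(\sigma,R)$, $\sigma\in\Sigma$, $R$ a region; a clocked word $(\sigma_1,\mathbf{v}_1)\cdots(\sigma_n,\mathbf{v}_n)$ has region word $\llbracket\cdot\rrbracket=(\sigma_1,\llbracket\mathbf{v}_1\rrbracket)\cdots(\sigma_n,\llbracket\mathbf{v}_n\rrbracket)$. $\mathit{vs}_{\mathcal{A}}(\gamma_r,\xi)$ is the set of reset-clocked words $\gamma_r'$ with $\llbracket vw(\gamma_r')\rrbracket=\xi$ such that $\gamma_r\gamma_r'$ is a valid reset-clocked word of $\mathcal{A}$. *)

theory Defs
  imports Complex_Main
begin

datatype cmp = CLt | CLe | CEq | CGe | CGt

fun cmp_sem :: "cmp \<Rightarrow> real \<Rightarrow> real \<Rightarrow> bool" where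
  "cmp_sem CLt x k = (x < k)"
| "cmp_sem CLe x k = (x \<le> k)"
| "cmp_sem CEq x k = (x = k)"
| "cmp_sem CGe x k = (x \<ge> k)"
| "cmp_sem CGt x k = (x > k)"

type_synonym 'c constr = "('c \<times> cmp \<times> nat) list"
type_synonym 'c val = "'c \<Rightarrow> real"

definition sat :: "'c val \<Rightarrow> 'c constr \<Rightarrow> bool" where
  "sat \<nu> \<phi> = (\<forall>(c, op, k) \<in> set \<phi>. cmp_sem op (\<nu> c) (real k))"

definition delay :: "'c val \<Rightarrow> real \<Rightarrow> 'c val" where
  "delay \<nu> d = (\<lambda>c. \<nu> c + d)"

definition reset :: "'c set \<Rightarrow> 'c val \<Rightarrow> 'c val" where
  "reset B \<nu> = (\<lambda>c. if c \<in> B then 0 else \<nu> c)"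

type_synonym ('l, 's, 'c) transition = "'l \<times> 's \<times> 'c constr \<times> 'c set \<times> 'l"

record ('s, 'l, 'c) ta =
  alphabet :: "'s set"
  locs :: "'l set"
  init :: 'l
  accepting :: "'l set"
  trans :: "('l, 's, 'c) transition set"

definition wf_ta :: "('s, 'l, 'c) ta \<Rightarrow> bool" where
  "wf_ta A \<longleftrightarrow> finite (alphabet A) \<and> finite (locs A) \<and> init A \<in> locs A
     \<and> accepting A \<subseteq> locs A \<and> finite (trans A)
     \<and> (\<forall>(l, \<sigma>, \<phi>, B, l') \<in> trans A. l \<in> locs A \<and> \<sigma> \<in> alphabet A \<and> l' \<in> locs A)"

definition dtw :: "('s, 'l, 'c) ta \<Rightarrow> ('s \<times> real) list \<Rightarrow> bool" where
  "dtw A w \<longleftrightarrow> (\<forall>(\<sigma>, t) \<in> set w. \<sigma> \<in> alphabet A \<and> t \<ge> 0)"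

fun is_run :: "('s, 'l, 'c) ta \<Rightarrow> 'l \<Rightarrow> 'c val \<Rightarrow> ('s \<times> real) list
     \<Rightarrow> ('l, 's, 'c) transition list \<Rightarrow> bool" where
  "is_run A l \<nu> [] [] = True"
| "is_run A l \<nu> ((\<sigma>, t) # w) ((l1, \<sigma>1, \<phi>, B, l2) # trs) =
     ((l1, \<sigma>1, \<phi>, B, l2) \<in> trans A \<and> l1 = l \<and> \<sigma>1 = \<sigma> \<and> sat (delay \<nu> t) \<phi>
      \<and> is_run A l2 (reset B (delay \<nu> t)) w trs)"
| "is_run A l \<nu> _ _ = False"

text \<open>Reset-clocked words: (\<sigma>, v, b) with b c = True iff clock c is reset.\<close>
type_synonym ('s, 'c) rcword = "('s \<times> 'c val \<times> ('c \<Rightarrow> bool)) list"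

fun run_rcw :: "'c val \<Rightarrow> ('s \<times> real) list \<Rightarrow> ('l, 's, 'c) transition list \<Rightarrow> ('s, 'c) rcword" where
  "run_rcw \<nu> ((\<sigma>, t) # w) ((l1, \<sigma>1, \<phi>, B, l2) # trs) =
     (\<sigma>, delay \<nu> t, \<lambda>c. c \<in> B) # run_rcw (reset B (delay \<nu> t)) w trs"
| "run_rcw \<nu> _ _ = []"

fun run_end :: "'l \<Rightarrow> 'c val \<Rightarrow> ('s \<times> real) list \<Rightarrow> ('l, 's, 'c) transition list \<Rightarrow> 'l \<times> 'c val" where
  "run_end l \<nu> ((\<sigma>, t) # w) ((l1, \<sigma>1, \<phi>, B, l2) # trs) =
     run_end l2 (reset B (delay \<nu> t)) w trs"
| "run_end l \<nu> _ _ = (l, \<nu>)"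

definition cta :: "('s, 'l, 'c) ta \<Rightarrow> bool" where
  "cta A \<longleftrightarrow> wf_ta A \<and> (\<forall>w. dtw A w \<longrightarrow> (\<exists>!trs. is_run A (init A) (\<lambda>_. 0) w trs))"

definition kappa :: "('s, 'l, 'c) ta \<Rightarrow> 'c \<Rightarrow> nat" where
  "kappa A c = Max ({k. \<exists>(l, \<sigma>, \<phi>, B, l') \<in> trans A. \<exists>op. (c, op, k) \<in> set \<phi>} \<union> {0})"

text \<open>The three conditions of the paper, literally (one direction).\<close>
definition region_cond :: "('c \<Rightarrow> nat) \<Rightarrow> 'c val \<Rightarrow> 'c val \<Rightarrow> bool" where
  "region_cond \<kappa> \<nu> \<nu>' \<longleftrightarrow>
     (\<forall>c. \<lfloor>\<nu> c\<rfloor> = \<lfloor>\<nu>' c\<rfloor> \<or> (\<nu> c > real (\<kappa> c) \<and> \<nu>' c > real (\<kappa> c)))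
   \<and> (\<forall>c. \<nu> c \<le> real (\<kappa> c) \<longrightarrow> (frac (\<nu> c) = 0 \<longleftrightarrow> frac (\<nu>' c) = 0))
   \<and> (\<forall>ci cj. \<nu> ci \<le> real (\<kappa> ci) \<and> \<nu> cj \<le> real (\<kappa> cj) \<longrightarrow>
        (frac (\<nu> ci) \<le> frac (\<nu> cj) \<longleftrightarrow> frac (\<nu>' ci) \<le> frac (\<nu>' cj)))"

definition region_equiv :: "('s, 'l, 'c) ta \<Rightarrow> 'c val \<Rightarrow> 'c val \<Rightarrow> bool" where
  "region_equiv A \<nu> \<nu>' \<longleftrightarrow> region_cond (kappa A) \<nu> \<nu>' \<and> region_cond (kappa A) \<nu>' \<nu>"

definition region :: "('s, 'l, 'c) ta \<Rightarrow> 'c val \<Rightarrow> 'c val set" where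
  "region A \<nu> = {\<nu>'. region_equiv A \<nu> \<nu>'}"

type_synonym ('s, 'c) region_word = "('s \<times> 'c val set) list"

definition is_region :: "('s, 'l, 'c) ta \<Rightarrow> 'c val set \<Rightarrow> bool" where
  "is_region A R \<longleftrightarrow> (\<exists>\<nu>. (\<forall>c. \<nu> c \<ge> 0) \<and> R = region A \<nu>)"

definition is_region_word :: "('s, 'l, 'c) ta \<Rightarrow> ('s, 'c) region_word \<Rightarrow> bool" where
  "is_region_word A \<xi> \<longleftrightarrow> (\<forall>(\<sigma>, R) \<in> set \<xi>. \<sigma> \<in> alphabet A \<and> is_region A R)"

definition resets :: "('s, 'c) rcword \<Rightarrow> ('c \<Rightarrow> bool) list" where
  "resets \<gamma> = map (\<lambda>(\<sigma>, v, b). b) \<gamma>"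

definition vw :: "('s, 'c) rcword \<Rightarrow> ('s \<times> 'c val) list" where
  "vw \<gamma> = map (\<lambda>(\<sigma>, v, b). (\<sigma>, v)) \<gamma>"

definition region_word_of :: "('s, 'l, 'c) ta \<Rightarrow> ('s \<times> 'c val) list \<Rightarrow> ('s, 'c) region_word" where
  "region_word_of A \<gamma> = map (\<lambda>(\<sigma>, v). (\<sigma>, region A v)) \<gamma>"

definition valid :: "('s, 'l, 'c) ta \<Rightarrow> ('s, 'c) rcword \<Rightarrow> bool" where
  "valid A \<gamma> \<longleftrightarrow> (\<exists>w trs. dtw A w \<and> is_run A (init A) (\<lambda>_. 0) w trs
                       \<and> run_rcw (\<lambda>_. 0) w trs = \<gamma>)"

definition reaches :: "('s, 'l, 'c) ta \<Rightarrow> ('s, 'c) rcword \<Rightarrow> 'l \<times> 'c val set \<Rightarrow> bool" where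
  "reaches A \<gamma> s \<longleftrightarrow> (\<exists>w trs. dtw A w \<and> is_run A (init A) (\<lambda>_. 0) w trs
       \<and> run_rcw (\<lambda>_. 0) w trs = \<gamma>
       \<and> (let (l, \<nu>) = run_end (init A) (\<lambda>_. 0) w trs in s = (l, region A \<nu>)))"

definition vs :: "('s, 'l, 'c) ta \<Rightarrow> ('s, 'c) rcword \<Rightarrow> ('s, 'c) region_word \<Rightarrow> ('s, 'c) rcword set" where
  "vs A \<gamma> \<xi> = {\<gamma>'. region_word_of A (vw \<gamma>') = \<xi> \<and> valid A (\<gamma> @ \<gamma>')}"

end

theory Submission imports Defs begin

definition cc :: "nat \<Rightarrow> real \<Rightarrow> real \<Rightarrow> bool" where
 "cc k x y \<longleftrightarrow> (x > real k \<longleftrightarrow> y > real k) \<and> (x \<le> real k \<longrightarrow> floor x = floor y \<and> (frac x = 0 \<longleftrightarrow> frac y = 0))"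

lemma clock_char:
  "((floor x = floor y \<or> (x > real k \<and> y > real k)) \<and> (x \<le> real k \<longrightarrow> (frac x = 0 \<longleftrightarrow> frac y = 0))
   \<and> (floor y = floor x \<or> (y > real k \<and> x > real k)) \<and> (y \<le> real k \<longrightarrow> (frac y = 0 \<longleftrightarrow> frac x = 0)))
   \<longleftrightarrow> cc k x y" (is "?L \<longleftrightarrow> _")
proof
  assume H: ?L
  then have h1: "floor x = floor y \<or> (x > real k \<and> y > real k)"
    and h2: "x \<le> real k \<longrightarrow> (frac x = 0 \<longleftrightarrow> frac y = 0)"
    and h4: "y \<le> real k \<longrightarrow> (frac y = 0 \<longleftrightarrow> frac x = 0)" by blast+
  have A: "x > real k \<longleftrightarrow> y > real k"
  proof (rule ccontr)
    assume "\<not> ?thesis"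
    then consider "x > real k" "y \<le> real k" | "y > real k" "x \<le> real k" by linarith
    then show False
    proof cases
      case 1
      have fl: "floor x = floor y" using h1 1 by linarith
      have fr: "frac y = 0 \<longleftrightarrow> frac x = 0" using h4 1 by blast
      have "floor y \<le> int k" using 1 by (simp add: floor_le_iff)
      moreover have "floor x \<ge> int k" using 1 by (simp add: le_floor_iff)
      ultimately have fk: "floor y = int k" using fl by simp
      then have "y = real k" using 1 of_int_floor_le[of y] by simp
      then have "frac x = 0" using fr by simp
      then have "x = of_int (floor x)" by (simp only: frac_def)
      then show False using fl fk 1 by simp
    next
      case 2
      have fl: "floor x = floor y" using h1 2 by linarith
      have fr: "frac x = 0 \<longleftrightarrow> frac y = 0" using h2 2 by blast
      have "floor x \<le> int k" using 2 by (simp add: floor_le_iff)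
      moreover have "floor y \<ge> int k" using 2 by (simp add: le_floor_iff)
      ultimately have fk: "floor x = int k" using fl by simp
      then have "x = real k" using 2 of_int_floor_le[of x] by simp
      then have "frac y = 0" using fr by simp
      then have "y = of_int (floor y)" by (simp only: frac_def)
      then show False using fl fk 2 by simp
    qed
  qed
  show "cc k x y" unfolding cc_def
  proof (intro conjI impI)
    show "(x > real k \<longleftrightarrow> y > real k)" by (rule A)
  next
    assume "x \<le> real k"
    then show "floor x = floor y" using h1 by linarith
  next
    assume "x \<le> real k"
    then show "(frac x = 0 \<longleftrightarrow> frac y = 0)" using h2 by blast
  qed
next
  assume C: "cc k x y"
  then have c1: "x > real k \<longleftrightarrow> y > real k" and c2: "x \<le> real k \<longrightarrow> floor x = floor y \<and> (frac x = 0 \<longleftrightarrow> frac y = 0)"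
    unfolding cc_def by blast+
  show ?L
  proof (intro conjI impI)
    show "floor x = floor y \<or> (x > real k \<and> y > real k)" using c1 c2 by linarith
    show "floor y = floor x \<or> (y > real k \<and> x > real k)" using c1 c2 by linarith
  next
    assume "x \<le> real k" then show "(frac x = 0 \<longleftrightarrow> frac y = 0)" using c2 by blast
  next
    assume "y \<le> real k" then have "x \<le> real k" using c1 by linarith
    then show "(frac y = 0 \<longleftrightarrow> frac x = 0)" using c2 by blast
  qed
qed

lemma region_equiv_char:
  "region_equiv A v v' \<longleftrightarrow> (\<forall>c. cc (kappa A c) (v c) (v' c)) \<and>
     (\<forall>ci cj. v ci \<le> real (kappa A ci) \<and> v cj \<le> real (kappa A cj) \<longrightarrow>
        (frac (v ci) \<le> frac (v cj) \<longleftrightarrow> frac (v' ci) \<le> frac (v' cj)))"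
proof -
  have "(\<forall>c. cc (kappa A c) (v c) (v' c)) \<longleftrightarrow>
     (\<forall>c. (\<lfloor>v c\<rfloor> = \<lfloor>v' c\<rfloor> \<or> (v c > real (kappa A c) \<and> v' c > real (kappa A c)))
   \<and> (v c \<le> real (kappa A c) \<longrightarrow> (frac (v c) = 0 \<longleftrightarrow> frac (v' c) = 0))
   \<and> (\<lfloor>v' c\<rfloor> = \<lfloor>v c\<rfloor> \<or> (v' c > real (kappa A c) \<and> v c > real (kappa A c)))
   \<and> (v' c \<le> real (kappa A c) \<longrightarrow> (frac (v' c) = 0 \<longleftrightarrow> frac (v c) = 0)))"
    using clock_char by blast
  note H = this
  show ?thesis
  proof
    assume R: "region_equiv A v v'"
    then have "\<forall>c. cc (kappa A c) (v c) (v' c)" using H unfolding region_equiv_def region_cond_def by blast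
    then show "(\<forall>c. cc (kappa A c) (v c) (v' c)) \<and>
     (\<forall>ci cj. v ci \<le> real (kappa A ci) \<and> v cj \<le> real (kappa A cj) \<longrightarrow>
        (frac (v ci) \<le> frac (v cj) \<longleftrightarrow> frac (v' ci) \<le> frac (v' cj)))"
      using R unfolding region_equiv_def region_cond_def by blast
  next
    assume R: "(\<forall>c. cc (kappa A c) (v c) (v' c)) \<and>
     (\<forall>ci cj. v ci \<le> real (kappa A ci) \<and> v cj \<le> real (kappa A cj) \<longrightarrow>
        (frac (v ci) \<le> frac (v cj) \<longleftrightarrow> frac (v' ci) \<le> frac (v' cj)))"
    then have C: "\<forall>c. cc (kappa A c) (v c) (v' c)" and Q: "\<forall>ci cj. v ci \<le> real (kappa A ci) \<and> v cj \<le> real (kappa A cj) \<longrightarrow>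
        (frac (v ci) \<le> frac (v cj) \<longleftrightarrow> frac (v' ci) \<le> frac (v' cj))" by auto
    have Q2: "\<forall>ci cj. v' ci \<le> real (kappa A ci) \<and> v' cj \<le> real (kappa A cj) \<longrightarrow>
        (frac (v' ci) \<le> frac (v' cj) \<longleftrightarrow> frac (v ci) \<le> frac (v cj))"
    proof (intro allI impI)
      fix ci cj assume a: "v' ci \<le> real (kappa A ci) \<and> v' cj \<le> real (kappa A cj)"
      have "v ci \<le> real (kappa A ci)" "v cj \<le> real (kappa A cj)"
        using a C unfolding cc_def by (meson not_less)+
      then show "(frac (v' ci) \<le> frac (v' cj) \<longleftrightarrow> frac (v ci) \<le> frac (v cj))" using Q by blast
    qed
    show "region_equiv A v v'" unfolding region_equiv_def region_cond_def
      using H C Q Q2 by blast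
  qed
qed

lemma region_equiv_refl: "region_equiv A v v"
  unfolding region_equiv_def region_cond_def by auto

lemma region_equiv_sym: "region_equiv A v v' \<Longrightarrow> region_equiv A v' v"
  unfolding region_equiv_def by auto

lemma region_equiv_trans: "region_equiv A u v \<Longrightarrow> region_equiv A v w \<Longrightarrow> region_equiv A u w"
proof -
  assume a1: "region_equiv A u v" and a2: "region_equiv A v w"
  have C1: "\<forall>c. cc (kappa A c) (u c) (v c)" and Q1: "\<forall>ci cj. u ci \<le> real (kappa A ci) \<and> u cj \<le> real (kappa A cj) \<longrightarrow>
        (frac (u ci) \<le> frac (u cj) \<longleftrightarrow> frac (v ci) \<le> frac (v cj))" using a1 unfolding region_equiv_char by auto
  have C2: "\<forall>c. cc (kappa A c) (v c) (w c)" and Q2: "\<forall>ci cj. v ci \<le> real (kappa A ci) \<and> v cj \<le> real (kappa A cj) \<longrightarrow>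
        (frac (v ci) \<le> frac (v cj) \<longleftrightarrow> frac (w ci) \<le> frac (w cj))" using a2 unfolding region_equiv_char by auto
  have C: "\<forall>c. cc (kappa A c) (u c) (w c)" using C1 C2 unfolding cc_def by (metis not_less)
  have Q: "\<forall>ci cj. u ci \<le> real (kappa A ci) \<and> u cj \<le> real (kappa A cj) \<longrightarrow>
        (frac (u ci) \<le> frac (u cj) \<longleftrightarrow> frac (w ci) \<le> frac (w cj))"
  proof (intro allI impI)
    fix ci cj assume a: "u ci \<le> real (kappa A ci) \<and> u cj \<le> real (kappa A cj)"
    have "v ci \<le> real (kappa A ci)" "v cj \<le> real (kappa A cj)"
      using a C1 unfolding cc_def by (meson not_less)+
    then show "(frac (u ci) \<le> frac (u cj) \<longleftrightarrow> frac (w ci) \<le> frac (w cj))" using Q1 Q2 a by blast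
  qed
  show ?thesis unfolding region_equiv_char using C Q by blast
qed

lemma region_eq: "region_equiv A u v \<Longrightarrow> region A u = region A v"
  unfolding region_def using region_equiv_trans region_equiv_sym by blast

lemma region_eqD: "region A u = region A v \<Longrightarrow> region_equiv A u v"
  unfolding region_def using region_equiv_refl by blast


lemma atom_pres:
  assumes "cc kk x y" "k \<le> kk" "cmp_sem op x (real k)"
  shows "cmp_sem op y (real k)"
proof (cases "x > real kk")
  case True
  then have "y > real kk" using assms(1) unfolding cc_def by auto
  then show ?thesis using True assms(2,3) by (cases op) auto
next
  case False
  then have fl: "floor x = floor y" and fr: "frac x = 0 \<longleftrightarrow> frac y = 0" using assms(1) unfolding cc_def by auto
  have lt: "x < real k \<longleftrightarrow> y < real k"
    using floor_less_iff[of x "int k"] floor_less_iff[of y "int k"] fl by simp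
  have eqi: "z = real k \<longleftrightarrow> floor z = int k \<and> frac z = 0" for z :: real
  proof
    assume "z = real k" then show "floor z = int k \<and> frac z = 0" by simp
  next
    assume "floor z = int k \<and> frac z = 0"
    then show "z = real k" unfolding frac_def by simp
  qed
  have eq: "x = real k \<longleftrightarrow> y = real k"
    using eqi[of x] eqi[of y] fl fr by simp
  show ?thesis using assms(3) lt eq by (cases op) auto
qed

lemma kappa_bound:
  assumes "wf_ta A" "(l, \<sigma>, \<phi>, B, l') \<in> trans A" "(c, op, k) \<in> set \<phi>"
  shows "k \<le> kappa A c"
proof -
  let ?S = "{k. \<exists>(l, \<sigma>, \<phi>, B, l') \<in> trans A. \<exists>op. (c, op, k) \<in> set \<phi>}"
  let ?T = "(\<Union>tr\<in>trans A. (\<lambda>x. snd (snd x)) ` set (fst (snd (snd tr))))"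
  have sub: "?S \<subseteq> ?T"
  proof
    fix k assume "k \<in> ?S"
    then obtain l \<sigma> \<phi> B l' op where t: "(l, \<sigma>, \<phi>, B, l') \<in> trans A" and m: "(c, op, k) \<in> set \<phi>"
      by blast
    have "k \<in> (\<lambda>x. snd (snd x)) ` set (fst (snd (snd (l, \<sigma>, \<phi>, B, l'))))"
      using m by (auto intro: image_eqI[where x="(c, op, k)"])
    then show "k \<in> ?T" using t by blast
  qed
  have "finite ?T"
    using assms(1) unfolding wf_ta_def by auto
  then have fin: "finite (?S \<union> {0})"
    using sub finite_subset by blast
  have "k \<in> ?S"
    using assms(2,3) by blast
  then have "k \<le> Max (?S \<union> {0})" using fin by (intro Max_ge) auto
  then show ?thesis unfolding kappa_def .
qed

lemma guard_pres:
  assumes "wf_ta A" "(l, \<sigma>, \<phi>, B, l') \<in> trans A" "region_equiv A v v'" "sat v \<phi>"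
  shows "sat v' \<phi>"
  unfolding sat_def
proof (clarify)
  fix c op k assume a: "(c, op, k) \<in> set \<phi>"
  have "cmp_sem op (v c) (real k)" using assms(4) a unfolding sat_def by auto
  moreover have "k \<le> kappa A c" using kappa_bound[OF assms(1,2) a] .
  moreover have "cc (kappa A c) (v c) (v' c)" using assms(3) unfolding region_equiv_char by auto
  ultimately show "cmp_sem op (v' c) (real k)" using atom_pres by blast
qed

lemma frac_le0: "frac (x::real) \<le> 0 \<longleftrightarrow> x \<in> \<int>"
  by (metis frac_eq_0_iff frac_ge_0 order_antisym order_refl)

lemma reset_cond: "region_cond k v v' \<Longrightarrow> region_cond k (reset B v) (reset B v')"
  unfolding region_cond_def reset_def
  apply (intro conjI allI impI)
  apply auto[2]
  subgoal for ci cj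
    apply (cases "ci \<in> B"; cases "cj \<in> B")
       apply (auto simp: frac_ge_0 frac_le0 frac_eq_0_iff)
    done
  done

lemma reset_equiv: "region_equiv A v v' \<Longrightarrow> region_equiv A (reset B v) (reset B v')"
  unfolding region_equiv_def using reset_cond by blast

lemma is_run_length: "is_run A l \<nu> w trs \<Longrightarrow> length w = length trs"
  by (induction A l \<nu> w trs rule: is_run.induct) auto

lemma length_run_rcw: "is_run A l \<nu> w trs \<Longrightarrow> length (run_rcw \<nu> w trs) = length w"
  by (induction A l \<nu> w trs rule: is_run.induct) auto

lemma tr5: obtains l1 \<sigma>1 \<phi> B l2 where "(y::('l,'s,'c) transition) = (l1, \<sigma>1, \<phi>, B, l2)"
  by (cases y) auto

lemma run_append:
  "length w1 = length trs1 \<Longrightarrow> is_run A l \<nu> (w1 @ w2) (trs1 @ trs2) =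
    (is_run A l \<nu> w1 trs1 \<and> is_run A (fst (run_end l \<nu> w1 trs1)) (snd (run_end l \<nu> w1 trs1)) w2 trs2)"
proof (induction w1 trs1 arbitrary: l \<nu> rule: list_induct2)
  case Nil then show ?case by simp
next
  case (Cons x xs y ys)
  obtain \<sigma> t where x: "x = (\<sigma>, t)" by (cases x)
  obtain l1 \<sigma>1 \<phi> B l2 where y: "y = (l1, \<sigma>1, \<phi>, B, l2)" by (rule tr5)
  show ?case using Cons.IH unfolding x y by auto
qed

lemma run_rcw_append:
  "length w1 = length trs1 \<Longrightarrow> run_rcw \<nu> (w1 @ w2) (trs1 @ trs2) =
    run_rcw \<nu> w1 trs1 @ run_rcw (snd (run_end l \<nu> w1 trs1)) w2 trs2"
proof (induction w1 trs1 arbitrary: l \<nu> rule: list_induct2)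
  case Nil then show ?case by simp
next
  case (Cons x xs y ys)
  obtain \<sigma> t where x: "x = (\<sigma>, t)" by (cases x)
  obtain l1 \<sigma>1 \<phi> B l2 where y: "y = (l1, \<sigma>1, \<phi>, B, l2)" by (rule tr5)
  show ?case using Cons.IH unfolding x y by auto
qed

lemma run_end_append:
  "length w1 = length trs1 \<Longrightarrow> run_end l \<nu> (w1 @ w2) (trs1 @ trs2) =
    run_end (fst (run_end l \<nu> w1 trs1)) (snd (run_end l \<nu> w1 trs1)) w2 trs2"
proof (induction w1 trs1 arbitrary: l \<nu> rule: list_induct2)
  case Nil then show ?case by simp
next
  case (Cons x xs y ys)
  obtain \<sigma> t where x: "x = (\<sigma>, t)" by (cases x)
  obtain l1 \<sigma>1 \<phi> B l2 where y: "y = (l1, \<sigma>1, \<phi>, B, l2)" by (rule tr5)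
  show ?case using Cons.IH unfolding x y by auto
qed

lemma dtw_append: "dtw A (w1 @ w2) \<longleftrightarrow> dtw A w1 \<and> dtw A w2"
  unfolding dtw_def by auto

lemma rcw_det:
  "is_run A l \<nu> w trs \<Longrightarrow> is_run A l' \<nu> w' trs' \<Longrightarrow> run_rcw \<nu> w trs = run_rcw \<nu> w' trs' \<Longrightarrow> w = w'"
proof (induction w arbitrary: l \<nu> trs l' w' trs')
  case Nil
  then have "trs = []" by (cases trs) auto
  then have "length w' = 0" using Nil length_run_rcw[OF Nil(2)] by simp
  then show ?case by simp
next
  case (Cons x w)
  obtain \<sigma> t where x: "x = (\<sigma>, t)" by (cases x)
  obtain y ys where trs: "trs = y # ys" using Cons.prems(1) by (cases trs) auto
  obtain l1 \<sigma>1 \<phi> B l2 where y: "y = (l1, \<sigma>1, \<phi>, B, l2)" by (rule tr5)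
  have "length w' = length (run_rcw \<nu> w' trs')" using length_run_rcw[OF Cons.prems(2)] by simp
  also have "\<dots> = Suc (length w)" using Cons.prems(3) length_run_rcw[OF Cons.prems(1)] by simp
  finally obtain x' w2 where w': "w' = x' # w2" by (cases w') auto
  obtain \<sigma>' t' where x': "x' = (\<sigma>', t')" by (cases x')
  obtain y' ys' where trs': "trs' = y' # ys'" using Cons.prems(2) w' by (cases trs') auto
  obtain l1' \<sigma>1' \<phi>' B' l2' where y': "y' = (l1', \<sigma>1', \<phi>', B', l2')" by (rule tr5)
  from Cons.prems(3) have e1: "\<sigma> = \<sigma>'" and e2: "delay \<nu> t = delay \<nu> t'" and e3: "(\<lambda>c. c \<in> B) = (\<lambda>c. c \<in> B')"
    and e4: "run_rcw (reset B (delay \<nu> t)) w ys = run_rcw (reset B' (delay \<nu> t')) w2 ys'"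
    unfolding x trs y w' x' trs' y' by auto
  have "t = t'" using fun_cong[OF e2, of undefined] unfolding delay_def by simp
  moreover have "B = B'" using e3 by (metis Collect_mem_eq)
  ultimately have "w = w2"
    using Cons.IH[of l2 "reset B (delay \<nu> t)" ys l2' w2 ys'] Cons.prems(1,2) e4
    unfolding x trs y w' x' trs' y' by auto
  then show ?case using e1 \<open>t = t'\<close> unfolding x w' x' by simp
qed

lemma cta_det:
  assumes "cta A" "dtw A w" "is_run A (init A) (\<lambda>_. 0) w trs" "is_run A (init A) (\<lambda>_. 0) w trs'"
  shows "trs = trs'"
  using assms unfolding cta_def by blast
lemma rw_cons: "region_word_of A (vw (run_rcw \<nu> ((\<sigma>, t) # u) ((l1, \<sigma>1, \<phi>, B, l2) # ss)))
   = (\<sigma>, region A (delay \<nu> t)) # region_word_of A (vw (run_rcw (reset B (delay \<nu> t)) u ss))"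
  unfolding region_word_of_def vw_def by simp

lemma resets_cons: "resets (run_rcw \<nu> ((\<sigma>, t) # u) ((l1, \<sigma>1, \<phi>, B, l2) # ss))
   = (\<lambda>c. c \<in> B) # resets (run_rcw (reset B (delay \<nu> t)) u ss)"
  unfolding resets_def by simp

lemma resets_Cons2: "resets ((\<sigma>, v, b) # xs) = b # resets xs"
  by (simp add: resets_def)

lemma core:
  assumes "cta A"
  shows "is_run A l \<nu>1 u1 ss1 \<Longrightarrow> is_run A l \<nu>2 u2 ss2 \<Longrightarrow> dtw A u2
   \<Longrightarrow> is_run A (init A) (\<lambda>_. 0) w2 trs2 \<Longrightarrow> dtw A w2 \<Longrightarrow> run_end (init A) (\<lambda>_. 0) w2 trs2 = (l, \<nu>2)
   \<Longrightarrow> region_equiv A \<nu>1 \<nu>2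
   \<Longrightarrow> region_word_of A (vw (run_rcw \<nu>1 u1 ss1)) = region_word_of A (vw (run_rcw \<nu>2 u2 ss2))
   \<Longrightarrow> resets (run_rcw \<nu>1 u1 ss1) = resets (run_rcw \<nu>2 u2 ss2)
     \<and> fst (run_end l \<nu>1 u1 ss1) = fst (run_end l \<nu>2 u2 ss2)
     \<and> region_equiv A (snd (run_end l \<nu>1 u1 ss1)) (snd (run_end l \<nu>2 u2 ss2))"
proof (induction u1 arbitrary: l \<nu>1 ss1 \<nu>2 u2 ss2 w2 trs2)
  case Nil
  then have s1: "ss1 = []" by (cases ss1) auto
  have "length (region_word_of A (vw (run_rcw \<nu>2 u2 ss2))) = 0"
    using Nil(8) unfolding s1 by (simp add: region_word_of_def vw_def)
  then have "length u2 = 0" using length_run_rcw[OF Nil(2)] by (simp add: region_word_of_def vw_def)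
  then have u2: "u2 = []" by simp
  then have s2: "ss2 = []" using Nil(2) by (cases ss2) auto
  show ?case using Nil(7) unfolding s1 s2 u2 by simp
next
  case (Cons x u1)
  obtain \<sigma> t where x: "x = (\<sigma>, t)" by (cases x)
  obtain y ys where ss1: "ss1 = y # ys" using Cons.prems(1) unfolding x by (cases ss1) auto
  obtain l1 \<sigma>1 \<phi> B l' where y: "y = (l1, \<sigma>1, \<phi>, B, l')" by (rule tr5)
  have "length u2 = length (region_word_of A (vw (run_rcw \<nu>2 u2 ss2)))"
    using length_run_rcw[OF Cons.prems(2)] by (simp add: region_word_of_def vw_def)
  also have "\<dots> = Suc (length u1)" unfolding Cons.prems(8)[symmetric] x ss1 y rw_cons
    using length_run_rcw[OF Cons.prems(1)[unfolded x ss1 y]] Cons.prems(1)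
    unfolding x ss1 y by (simp add: region_word_of_def vw_def length_run_rcw)
  finally obtain x' u2' where u2: "u2 = x' # u2'" by (cases u2) auto
  obtain \<sigma>' t2 where x': "x' = (\<sigma>', t2)" by (cases x')
  obtain y' ys' where ss2: "ss2 = y' # ys'" using Cons.prems(2) unfolding u2 x' by (cases ss2) auto
  obtain l1' \<sigma>1' \<phi>' B' l'' where y': "y' = (l1', \<sigma>1', \<phi>', B', l'')" by (rule tr5)
  note R1 = Cons.prems(1)[unfolded x ss1 y, simplified]
  note R2 = Cons.prems(2)[unfolded u2 x' ss2 y', simplified]
  note RW = Cons.prems(8)[unfolded x ss1 y u2 x' ss2 y' rw_cons, simplified]
  have wf: "wf_ta A" using assms unfolding cta_def by blast
  have sig: "\<sigma>' = \<sigma>" and reg: "region A (delay \<nu>1 t) = region A (delay \<nu>2 t2)"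
    and RW': "region_word_of A (vw (run_rcw (reset B (delay \<nu>1 t)) u1 ys)) =
              region_word_of A (vw (run_rcw (reset B' (delay \<nu>2 t2)) u2' ys'))"
    using RW by auto
  have tin: "(l, \<sigma>, \<phi>, B, l') \<in> trans A" and g1: "sat (delay \<nu>1 t) \<phi>"
    and run1: "is_run A l' (reset B (delay \<nu>1 t)) u1 ys" using R1 by auto
  have tin': "(l, \<sigma>, \<phi>', B', l'') \<in> trans A" and g2': "sat (delay \<nu>2 t2) \<phi>'"
    and run2: "is_run A l'' (reset B' (delay \<nu>2 t2)) u2' ys'" using R2 sig by auto
  have g2: "sat (delay \<nu>2 t2) \<phi>"
    using guard_pres[OF wf tin region_eqD[OF reg] g1] .
  have dtwu2: "dtw A u2'" and t2: "t2 \<ge> 0" using Cons.prems(3) unfolding u2 x' dtw_def by auto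
  have sigA: "\<sigma> \<in> alphabet A" using wf tin unfolding wf_ta_def by blast
  have dtwn: "dtw A (w2 @ [(\<sigma>, t2)])" using Cons.prems(5) sigA t2 unfolding dtw_def by auto
  have len: "length w2 = length trs2" using is_run_length[OF Cons.prems(4)] .
  have ra: "is_run A (init A) (\<lambda>_. 0) (w2 @ [(\<sigma>, t2)]) (trs2 @ [(l, \<sigma>, \<phi>, B, l')])"
    using run_append[OF len] Cons.prems(4,6) tin g2 by simp
  have rb: "is_run A (init A) (\<lambda>_. 0) (w2 @ [(\<sigma>, t2)]) (trs2 @ [(l, \<sigma>, \<phi>', B', l'')])"
    using run_append[OF len] Cons.prems(4,6) tin' g2' by simp
  have "trs2 @ [(l, \<sigma>, \<phi>, B, l')] = trs2 @ [(l, \<sigma>, \<phi>', B', l'')]"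
    using cta_det[OF assms dtwn ra rb] .
  then have eqs: "\<phi>' = \<phi>" "B' = B" "l'' = l'" by auto
  have re: "region_equiv A (reset B (delay \<nu>1 t)) (reset B (delay \<nu>2 t2))"
    using reset_equiv region_eqD[OF reg] by blast
  have endn: "run_end (init A) (\<lambda>_. 0) (w2 @ [(\<sigma>, t2)]) (trs2 @ [(l, \<sigma>, \<phi>, B, l')]) = (l', reset B (delay \<nu>2 t2))"
    using run_end_append[OF len] Cons.prems(6) by simp
  have IH: "resets (run_rcw (reset B (delay \<nu>1 t)) u1 ys) = resets (run_rcw (reset B (delay \<nu>2 t2)) u2' ys')
     \<and> fst (run_end l' (reset B (delay \<nu>1 t)) u1 ys) = fst (run_end l' (reset B (delay \<nu>2 t2)) u2' ys')
     \<and> region_equiv A (snd (run_end l' (reset B (delay \<nu>1 t)) u1 ys)) (snd (run_end l' (reset B (delay \<nu>2 t2)) u2' ys'))"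
    apply (rule Cons.IH[OF run1 _ dtwu2 ra dtwn endn re])
    using run2 RW' eqs by simp_all
  show ?case unfolding x ss1 y u2 x' ss2 y' using IH eqs sig R1 R2 by (simp add: resets_Cons2)
qed
lemma split_run:
  assumes "is_run A l \<nu> W TR" "run_rcw \<nu> W TR = g @ g'"
  obtains w u trs ss where "W = w @ u" "TR = trs @ ss" "length w = length trs"
    "is_run A l \<nu> w trs" "is_run A (fst (run_end l \<nu> w trs)) (snd (run_end l \<nu> w trs)) u ss"
    "run_rcw \<nu> w trs = g" "run_rcw (snd (run_end l \<nu> w trs)) u ss = g'"
proof -
  let ?n = "length g"
  have lw: "length W = length TR" using is_run_length[OF assms(1)] .
  have "length W = length (g @ g')" using length_run_rcw[OF assms(1)] assms(2) by simp
  then have nle: "?n \<le> length W" by simp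
  have len: "length (take ?n W) = length (take ?n TR)" using lw by simp
  have R: "is_run A l \<nu> (take ?n W @ drop ?n W) (take ?n TR @ drop ?n TR)" using assms(1) by simp
  note RA = R[unfolded run_append[OF len]]
  have "run_rcw \<nu> (take ?n W @ drop ?n W) (take ?n TR @ drop ?n TR) = g @ g'" using assms(2) by simp
  then have E: "run_rcw \<nu> (take ?n W) (take ?n TR) @ run_rcw (snd (run_end l \<nu> (take ?n W) (take ?n TR))) (drop ?n W) (drop ?n TR) = g @ g'"
    unfolding run_rcw_append[OF len, of _ _ _ l] .
  have "length (run_rcw \<nu> (take ?n W) (take ?n TR)) = ?n"
    using length_run_rcw[of A l \<nu> "take ?n W" "take ?n TR"] RA nle by simp
  then have "run_rcw \<nu> (take ?n W) (take ?n TR) = g" "run_rcw (snd (run_end l \<nu> (take ?n W) (take ?n TR))) (drop ?n W) (drop ?n TR) = g'"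
    using E by (simp_all add: append_eq_append_conv)
  then show ?thesis using that[of "take ?n W" "drop ?n W" "take ?n TR" "drop ?n TR"] RA len by simp
qed

theorem lemma3p6:
  fixes A :: "('s, 'l, 'c::finite) ta"
    and \<gamma>1 \<gamma>2 \<gamma>1' \<gamma>2' :: "('s, 'c) rcword"
    and \<xi> :: "('s, 'c) region_word"
  assumes "cta A"
    and "valid A \<gamma>1" and "valid A \<gamma>2"
    and "is_region_word A \<xi>"
    and "\<exists>s. reaches A \<gamma>1 s \<and> reaches A \<gamma>2 s"
    and "\<gamma>1' \<in> vs A \<gamma>1 \<xi>" and "\<gamma>2' \<in> vs A \<gamma>2 \<xi>"
  shows "resets \<gamma>1' = resets \<gamma>2'
         \<and> (\<exists>s. reaches A (\<gamma>1 @ \<gamma>1') s \<and> reaches A (\<gamma>2 @ \<gamma>2') s)"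
proof -
  obtain l R where r1: "reaches A \<gamma>1 (l, R)" and r2: "reaches A \<gamma>2 (l, R)" using assms(5) by auto
  obtain W01 T01 where d01: "dtw A W01" and i01: "is_run A (init A) (\<lambda>_. 0) W01 T01"
    and c01: "run_rcw (\<lambda>_. 0) W01 T01 = \<gamma>1"
    and e01: "fst (run_end (init A) (\<lambda>_. 0) W01 T01) = l" "region A (snd (run_end (init A) (\<lambda>_. 0) W01 T01)) = R"
  proof -
    from r1 obtain W T where "dtw A W" "is_run A (init A) (\<lambda>_. 0) W T" "run_rcw (\<lambda>_. 0) W T = \<gamma>1"
      and L: "(let (l', \<nu>) = run_end (init A) (\<lambda>_. 0) W T in (l, R) = (l', region A \<nu>))"
      unfolding reaches_def by blast
    moreover from L have "(l, R) = (fst (run_end (init A) (\<lambda>_. 0) W T), region A (snd (run_end (init A) (\<lambda>_. 0) W T)))"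
      by (simp add: Let_def case_prod_beta)
    ultimately show ?thesis using that by simp
  qed
  obtain W02 T02 where d02: "dtw A W02" and i02: "is_run A (init A) (\<lambda>_. 0) W02 T02"
    and c02: "run_rcw (\<lambda>_. 0) W02 T02 = \<gamma>2"
    and e02: "fst (run_end (init A) (\<lambda>_. 0) W02 T02) = l" "region A (snd (run_end (init A) (\<lambda>_. 0) W02 T02)) = R"
  proof -
    from r2 obtain W T where "dtw A W" "is_run A (init A) (\<lambda>_. 0) W T" "run_rcw (\<lambda>_. 0) W T = \<gamma>2"
      and L: "(let (l', \<nu>) = run_end (init A) (\<lambda>_. 0) W T in (l, R) = (l', region A \<nu>))"
      unfolding reaches_def by blast
    moreover from L have "(l, R) = (fst (run_end (init A) (\<lambda>_. 0) W T), region A (snd (run_end (init A) (\<lambda>_. 0) W T)))"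
      by (simp add: Let_def case_prod_beta)
    ultimately show ?thesis using that by simp
  qed
  define \<nu>1 where "\<nu>1 = snd (run_end (init A) (\<lambda>_. 0) W01 T01)"
  define \<nu>2 where "\<nu>2 = snd (run_end (init A) (\<lambda>_. 0) W02 T02)"
  have end1: "run_end (init A) (\<lambda>_. 0) W01 T01 = (l, \<nu>1)" using e01 \<nu>1_def by (metis prod.collapse)
  have end2: "run_end (init A) (\<lambda>_. 0) W02 T02 = (l, \<nu>2)" using e02 \<nu>2_def by (metis prod.collapse)
  have req: "region_equiv A \<nu>1 \<nu>2" using e01(2) e02(2) \<nu>1_def \<nu>2_def region_eqD by metis
  obtain W1 TR1 where D1: "dtw A W1" and I1: "is_run A (init A) (\<lambda>_. 0) W1 TR1"
    and C1: "run_rcw (\<lambda>_. 0) W1 TR1 = \<gamma>1 @ \<gamma>1'"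
    using assms(6) unfolding vs_def valid_def by auto
  obtain W2 TR2 where D2: "dtw A W2" and I2: "is_run A (init A) (\<lambda>_. 0) W2 TR2"
    and C2: "run_rcw (\<lambda>_. 0) W2 TR2 = \<gamma>2 @ \<gamma>2'"
    using assms(7) unfolding vs_def valid_def by auto
  have rw: "region_word_of A (vw \<gamma>1') = region_word_of A (vw \<gamma>2')" using assms(6,7) unfolding vs_def by simp
  obtain w1 u1 trs1 ss1 where s1: "W1 = w1 @ u1" "TR1 = trs1 @ ss1" "length w1 = length trs1"
    "is_run A (init A) (\<lambda>_. 0) w1 trs1"
    "is_run A (fst (run_end (init A) (\<lambda>_. 0) w1 trs1)) (snd (run_end (init A) (\<lambda>_. 0) w1 trs1)) u1 ss1"
    "run_rcw (\<lambda>_. 0) w1 trs1 = \<gamma>1" "run_rcw (snd (run_end (init A) (\<lambda>_. 0) w1 trs1)) u1 ss1 = \<gamma>1'"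
    using split_run[OF I1 C1] by blast
  obtain w2 u2 trs2 ss2 where s2: "W2 = w2 @ u2" "TR2 = trs2 @ ss2" "length w2 = length trs2"
    "is_run A (init A) (\<lambda>_. 0) w2 trs2"
    "is_run A (fst (run_end (init A) (\<lambda>_. 0) w2 trs2)) (snd (run_end (init A) (\<lambda>_. 0) w2 trs2)) u2 ss2"
    "run_rcw (\<lambda>_. 0) w2 trs2 = \<gamma>2" "run_rcw (snd (run_end (init A) (\<lambda>_. 0) w2 trs2)) u2 ss2 = \<gamma>2'"
    using split_run[OF I2 C2] by blast
  have "w1 = W01" using rcw_det[OF s1(4) i01] s1(6) c01 by simp
  moreover then have "trs1 = T01" using cta_det[OF assms(1) d01 _ i01] s1(4) by simp
  ultimately have ee1: "run_end (init A) (\<lambda>_. 0) w1 trs1 = (l, \<nu>1)" using end1 by simp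
  have "w2 = W02" using rcw_det[OF s2(4) i02] s2(6) c02 by simp
  moreover then have "trs2 = T02" using cta_det[OF assms(1) d02 _ i02] s2(4) by simp
  ultimately have ee2: "run_end (init A) (\<lambda>_. 0) w2 trs2 = (l, \<nu>2)" using end2 by simp
  have ru1: "is_run A l \<nu>1 u1 ss1" using s1(5) ee1 by simp
  have ru2: "is_run A l \<nu>2 u2 ss2" using s2(5) ee2 by simp
  have g1: "run_rcw \<nu>1 u1 ss1 = \<gamma>1'" using s1(7) ee1 by simp
  have g2: "run_rcw \<nu>2 u2 ss2 = \<gamma>2'" using s2(7) ee2 by simp
  have du2: "dtw A u2" using D2 s2(1) dtw_append by blast
  have K: "resets (run_rcw \<nu>1 u1 ss1) = resets (run_rcw \<nu>2 u2 ss2)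
     \<and> fst (run_end l \<nu>1 u1 ss1) = fst (run_end l \<nu>2 u2 ss2)
     \<and> region_equiv A (snd (run_end l \<nu>1 u1 ss1)) (snd (run_end l \<nu>2 u2 ss2))"
    using core[OF assms(1) ru1 ru2 du2 i02 d02 end2 req] rw g1 g2 by simp
  have F1: "run_end (init A) (\<lambda>_. 0) W1 TR1 = run_end l \<nu>1 u1 ss1"
    using run_end_append[OF s1(3)] s1(1,2) ee1 by simp
  have F2: "run_end (init A) (\<lambda>_. 0) W2 TR2 = run_end l \<nu>2 u2 ss2"
    using run_end_append[OF s2(3)] s2(1,2) ee2 by simp
  define s where "s = (fst (run_end l \<nu>1 u1 ss1), region A (snd (run_end l \<nu>1 u1 ss1)))"
  have "reaches A (\<gamma>1 @ \<gamma>1') s"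
    unfolding reaches_def using D1 I1 C1 F1 unfolding s_def by (simp add: Let_def case_prod_beta) metis
  moreover have "reaches A (\<gamma>2 @ \<gamma>2') s"
  proof -
    have "s = (fst (run_end l \<nu>2 u2 ss2), region A (snd (run_end l \<nu>2 u2 ss2)))"
      unfolding s_def using K region_eq by metis
    then show ?thesis
      unfolding reaches_def using D2 I2 C2 F2 by (simp add: Let_def case_prod_beta) metis
  qed
  ultimately show ?thesis using K g1 g2 by blast
qed
end
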